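(* If $G$ is a very well-covered graph of girth at least $5$, then $\Psi(G)$ is a greedoid on $V(G)$.
   Context: All graphs are finite, simple, undirected. For $A\subseteq V(G)$, $N(A)=\{v\in V(G)-A: N(v)\cap A\neq\emptyset\}$ and $N[A]=A\cup N(A)$; $G[X]$ is the subgraph induced by $X$. A stable set is a set of pairwise non-adjacent vertices; $\alpha(G)$ is the maximum size of a stable set. $G$ is well-covered if all its maximal stable sets have the same cardinality, and very well-covered if it is well-covered, has no isolated vertices, and $|V(G)|=2\alpha(G)$. A set $A\subseteq V(G)$ is a local maximum stable set of $G$ if $A$ is a maximum stable set of $G[N[A]]$; $\Psi(G)$ denotes the family of all local maximum stable sets of $G$. A greedoid on a finite set $V$ is a non-empty family $\mathcal{F}\subseteq 2^V$ such that (Accessibility) every non-empty $X\in\mathcal{F}$ has an element $x\in X$ with $X-\{x\}\in\mathcal{F}$, and (Exchange) for all $X,Y\in\mathcal{F}$ with $|X|=|Y|+1$ there is $x\in X-Y$ with $Y\cup\{x\}\in\mathcal{F}$. *)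

theory Defs
  imports Main
begin

definition graph :: "'a set \<Rightarrow> ('a \<Rightarrow> 'a \<Rightarrow> bool) \<Rightarrow> bool" where
  "graph V E \<longleftrightarrow> finite V \<and> (\<forall>u v. E u v \<longrightarrow> u \<in> V \<and> v \<in> V)
     \<and> (\<forall>u v. E u v \<longrightarrow> E v u) \<and> (\<forall>v. \<not> E v v)"

definition nbhd :: "'a set \<Rightarrow> ('a \<Rightarrow> 'a \<Rightarrow> bool) \<Rightarrow> 'a set \<Rightarrow> 'a set" where
  "nbhd V E A = {v \<in> V - A. \<exists>a\<in>A. E v a}"

definition cnbhd :: "'a set \<Rightarrow> ('a \<Rightarrow> 'a \<Rightarrow> bool) \<Rightarrow> 'a set \<Rightarrow> 'a set" where
  "cnbhd V E A = A \<union> nbhd V E A"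

definition stable :: "('a \<Rightarrow> 'a \<Rightarrow> bool) \<Rightarrow> 'a set \<Rightarrow> bool" where
  "stable E S \<longleftrightarrow> (\<forall>u\<in>S. \<forall>v\<in>S. \<not> E u v)"

text \<open>Stable sets of the induced subgraph G[X]: stable subsets of X.\<close>
definition max_stable :: "'a set \<Rightarrow> ('a \<Rightarrow> 'a \<Rightarrow> bool) \<Rightarrow> 'a set \<Rightarrow> bool" where
  "max_stable X E S \<longleftrightarrow> S \<subseteq> X \<and> stable E S
     \<and> (\<forall>T. T \<subseteq> X \<and> stable E T \<longrightarrow> card T \<le> card S)"

definition alpha :: "'a set \<Rightarrow> ('a \<Rightarrow> 'a \<Rightarrow> bool) \<Rightarrow> nat" where
  "alpha V E = Max {card S | S. S \<subseteq> V \<and> stable E S}"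

definition maximal_stable :: "'a set \<Rightarrow> ('a \<Rightarrow> 'a \<Rightarrow> bool) \<Rightarrow> 'a set \<Rightarrow> bool" where
  "maximal_stable V E S \<longleftrightarrow> S \<subseteq> V \<and> stable E S
     \<and> (\<forall>T. S \<subset> T \<and> T \<subseteq> V \<longrightarrow> \<not> stable E T)"

definition well_covered :: "'a set \<Rightarrow> ('a \<Rightarrow> 'a \<Rightarrow> bool) \<Rightarrow> bool" where
  "well_covered V E \<longleftrightarrow> (\<forall>S T. maximal_stable V E S \<and> maximal_stable V E T \<longrightarrow> card S = card T)"

definition very_well_covered :: "'a set \<Rightarrow> ('a \<Rightarrow> 'a \<Rightarrow> bool) \<Rightarrow> bool" where
  "very_well_covered V E \<longleftrightarrow> well_covered V E \<and> (\<forall>v\<in>V. \<exists>u. E v u)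
     \<and> card V = 2 * alpha V E"

definition is_cycle :: "'a set \<Rightarrow> ('a \<Rightarrow> 'a \<Rightarrow> bool) \<Rightarrow> 'a list \<Rightarrow> bool" where
  "is_cycle V E cs \<longleftrightarrow> length cs \<ge> 3 \<and> distinct cs \<and> set cs \<subseteq> V
     \<and> (\<forall>i < length cs. E (cs ! i) (cs ! ((i + 1) mod length cs)))"

text \<open>Girth at least g: every cycle has length at least g (acyclic graphs have
infinite girth).\<close>
definition girth_ge :: "'a set \<Rightarrow> ('a \<Rightarrow> 'a \<Rightarrow> bool) \<Rightarrow> nat \<Rightarrow> bool" where
  "girth_ge V E g \<longleftrightarrow> (\<forall>cs. is_cycle V E cs \<longrightarrow> length cs \<ge> g)"

definition local_max_stable :: "'a set \<Rightarrow> ('a \<Rightarrow> 'a \<Rightarrow> bool) \<Rightarrow> 'a set \<Rightarrow> bool" where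
  "local_max_stable V E A \<longleftrightarrow> A \<subseteq> V \<and> max_stable (cnbhd V E A) E A"

definition Psi :: "'a set \<Rightarrow> ('a \<Rightarrow> 'a \<Rightarrow> bool) \<Rightarrow> 'a set set" where
  "Psi V E = {A. local_max_stable V E A}"

definition greedoid :: "'a set \<Rightarrow> 'a set set \<Rightarrow> bool" where
  "greedoid V F \<longleftrightarrow> F \<noteq> {} \<and> (\<forall>X\<in>F. X \<subseteq> V)
     \<and> (\<forall>X\<in>F. X \<noteq> {} \<longrightarrow> (\<exists>x\<in>X. X - {x} \<in> F))
     \<and> (\<forall>X\<in>F. \<forall>Y\<in>F. card X = card Y + 1 \<longrightarrow> (\<exists>x\<in>X - Y. Y \<union> {x} \<in> F))"

end

theory Submission
  imports Defs
begin

definition iso :: "'a set \<Rightarrow> ('a \<Rightarrow> 'a \<Rightarrow> bool) \<Rightarrow> 'a set" where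
  "iso W E = {v\<in>W. \<forall>u\<in>W. \<not> E v u}"

lemma alpha_ge:
  assumes "finite W" "T \<subseteq> W" "stable E T"
  shows "card T \<le> alpha W E"
proof -
  have fin: "finite {card S | S. S \<subseteq> W \<and> stable E S}"
  proof (rule finite_subset[of _ "card ` Pow W"])
    show "{card S | S. S \<subseteq> W \<and> stable E S} \<subseteq> card ` Pow W" by auto
  qed (use assms in auto)
  show ?thesis unfolding alpha_def using assms by (intro Max_ge[OF fin]) auto
qed

lemma alpha_ex:
  assumes "finite W"
  shows "\<exists>S. S \<subseteq> W \<and> stable E S \<and> card S = alpha W E"
proof -
  have fin: "finite {card S | S. S \<subseteq> W \<and> stable E S}"
  proof (rule finite_subset[of _ "card ` Pow W"])
    show "{card S | S. S \<subseteq> W \<and> stable E S} \<subseteq> card ` Pow W" by auto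
  qed (use assms in auto)
  have ne: "{card S | S. S \<subseteq> W \<and> stable E S} \<noteq> {}"
    by (auto simp: stable_def intro!: exI[of _ "{}"])
  show ?thesis using Max_in[OF fin ne] unfolding alpha_def by auto
qed

lemma ext_maximal:
  assumes "finite W" "S \<subseteq> W" "stable E S"
  shows "\<exists>M. maximal_stable W E M \<and> S \<subseteq> M"
proof -
  let ?F = "{T. S \<subseteq> T \<and> T \<subseteq> W \<and> stable E T}"
  have "?F \<subseteq> Pow W" by blast
  then have "finite ?F" using assms(1) finite_subset by blast
  moreover have "?F \<noteq> {}" using assms by blast
  ultimately have "\<exists>m\<in>?F. \<forall>b\<in>?F. m \<le> b \<longrightarrow> m = b" by (rule finite_has_maximal)
  then obtain M where M1: "M \<in> ?F" and M2: "\<forall>b\<in>?F. M \<le> b \<longrightarrow> M = b" ..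
  note M = M1 M2
  have "maximal_stable W E M" unfolding maximal_stable_def
  proof (intro conjI allI impI)
    show "M \<subseteq> W" using M by blast
    show "stable E M" using M by blast
    fix T assume T: "M \<subset> T \<and> T \<subseteq> W"
    show "\<not> stable E T"
    proof
      assume "stable E T"
      then have "T \<in> ?F" using M(1) T by blast
      then show False using M2 T by auto
    qed
  qed
  then show ?thesis using M by blast
qed

lemma maxcard_maximal:
  assumes "finite W" "S \<subseteq> W" "stable E S" "card S = alpha W E"
  shows "maximal_stable W E S"
  unfolding maximal_stable_def
proof (intro conjI allI impI)
  fix T assume T: "S \<subset> T \<and> T \<subseteq> W"
  show "\<not> stable E T"
  proof
    assume "stable E T"
    then have "card T \<le> alpha W E" using alpha_ge assms T by blast
    moreover have "card S < card T" using T assms(1) by (meson finite_subset psubset_card_mono)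
    ultimately show False using assms by simp
  qed
qed (use assms in auto)

lemma wc_card:
  assumes "finite W" "well_covered W E" "maximal_stable W E M"
  shows "card M = alpha W E"
proof -
  obtain S where "S \<subseteq> W" "stable E S" "card S = alpha W E" using alpha_ex assms(1) by blast
  then have "maximal_stable W E S" using maxcard_maximal assms(1) by blast
  then show ?thesis using assms \<open>card S = alpha W E\<close> unfolding well_covered_def by metis
qed

locale G0 =
  fixes V :: "'a set" and E :: "'a \<Rightarrow> 'a \<Rightarrow> bool"
  assumes finV: "finite V"
    and inV1: "\<And>u v. E u v \<Longrightarrow> u \<in> V"
    and inV2: "\<And>u v. E u v \<Longrightarrow> v \<in> V"
    and sym: "\<And>u v. E u v \<Longrightarrow> E v u"
    and irr: "\<And>v. \<not> E v v"
    and notri: "\<And>a b c. E a b \<Longrightarrow> E b c \<Longrightarrow> E c a \<Longrightarrow> False"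
    and noC4: "\<And>a b c d. E a b \<Longrightarrow> E b c \<Longrightarrow> E c d \<Longrightarrow> E d a \<Longrightarrow> a \<noteq> c \<Longrightarrow> b \<noteq> d \<Longrightarrow> False"
begin

lemma maximal_iff:
  "maximal_stable W E M \<longleftrightarrow> M \<subseteq> W \<and> stable E M \<and> (\<forall>x\<in>W-M. \<exists>m\<in>M. E x m)"
proof
  assume A: "maximal_stable W E M"
  show "M \<subseteq> W \<and> stable E M \<and> (\<forall>x\<in>W-M. \<exists>m\<in>M. E x m)"
  proof (intro conjI ballI)
    fix x assume x: "x \<in> W - M"
    show "\<exists>m\<in>M. E x m"
    proof (rule ccontr)
      assume "\<not> (\<exists>m\<in>M. E x m)"
      then have "stable E (insert x M)" using A irr sym unfolding maximal_stable_def stable_def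
        by (metis insert_iff)
      moreover have "M \<subset> insert x M \<and> insert x M \<subseteq> W" using A x unfolding maximal_stable_def by auto
      ultimately show False using A unfolding maximal_stable_def by (metis (no_types))
    qed
  qed (use A in \<open>auto simp: maximal_stable_def\<close>)
next
  assume A: "M \<subseteq> W \<and> stable E M \<and> (\<forall>x\<in>W-M. \<exists>m\<in>M. E x m)"
  show "maximal_stable W E M" unfolding maximal_stable_def
  proof (intro conjI allI impI)
    fix T assume T: "M \<subset> T \<and> T \<subseteq> W"
    then obtain x where "x \<in> T" "x \<notin> M" by auto
    then have "x \<in> W - M" using T by auto
    then obtain m where "m \<in> M" "E x m" using A by blast
    then show "\<not> stable E T" using T \<open>x \<in> T\<close> unfolding stable_def by blast
  qed (use A in auto)
qed

lemma wcN:
  assumes "finite W" "well_covered W E" "v \<in> W"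
  defines "W' \<equiv> W - insert v {u\<in>W. E v u}"
  shows "well_covered W' E \<and> alpha W' E + 1 = alpha W E"
proof -
  have fW': "finite W'" using assms(1) unfolding W'_def by auto
  have key: "card M + 1 = alpha W E" if M: "maximal_stable W' E M" for M
  proof -
    have MW: "M \<subseteq> W'" "stable E M" "\<forall>x\<in>W'-M. \<exists>m\<in>M. E x m" using M maximal_iff by auto
    have "maximal_stable W E (insert v M)" unfolding maximal_iff
    proof (intro conjI ballI)
      show "insert v M \<subseteq> W" using MW assms(3) unfolding W'_def by auto
      show "stable E (insert v M)" using MW sym irr unfolding stable_def W'_def by blast
      fix x assume x: "x \<in> W - insert v M"
      show "\<exists>m\<in>insert v M. E x m"
      proof (cases "x \<in> W'")
        case True then show ?thesis using MW x by auto
      next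
        case False then show ?thesis using x sym unfolding W'_def by auto
      qed
    qed
    then have "card (insert v M) = alpha W E" using wc_card assms by blast
    moreover have "v \<notin> M" using MW unfolding W'_def by auto
    moreover have "finite M" using MW fW' finite_subset by blast
    ultimately show ?thesis by simp
  qed
  have wc: "well_covered W' E" unfolding well_covered_def using key by (metis add_right_cancel)
  obtain S where "S \<subseteq> W'" "stable E S" "card S = alpha W' E" using alpha_ex fW' by blast
  then have "maximal_stable W' E S" using maxcard_maximal fW' by blast
  then show ?thesis using wc key \<open>card S = alpha W' E\<close> by metis
qed

lemma two_leaves:
  assumes "finite W" "well_covered W E" "s \<in> W" "l1 \<in> W" "l2 \<in> W" "l1 \<noteq> l2"
    "E l1 s" "E l2 s" "\<forall>u\<in>W. E l1 u \<longrightarrow> u = s" "\<forall>u\<in>W. E l2 u \<longrightarrow> u = s"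
  shows False
proof -
  let ?W = "W - insert s {u\<in>W. E s u}"
  have st0: "stable E {}" by (simp add: stable_def)
  have fW: "finite ?W" using assms(1) by simp
  from ext_maximal[OF fW empty_subsetI st0] obtain S0 where S0: "maximal_stable ?W E S0" by blast
  have S0p: "S0 \<subseteq> ?W" "stable E S0" "\<forall>x\<in>?W-S0. \<exists>m\<in>S0. E x m" using S0 maximal_iff by auto
  have fS0: "finite S0" using S0p(1) assms(1) finite_subset by blast
  have "maximal_stable W E (insert s S0)" unfolding maximal_iff
  proof (intro conjI ballI)
    show "insert s S0 \<subseteq> W" using S0p assms(3) by auto
    show "stable E (insert s S0)" using S0p sym irr unfolding stable_def by blast
    fix x assume x: "x \<in> W - insert s S0"
    show "\<exists>m\<in>insert s S0. E x m"
    proof (cases "x \<in> ?W")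
      case True then show ?thesis using S0p x by auto
    next
      case False then have "E s x" using x by auto
      then show ?thesis using sym by blast
    qed
  qed
  then have c1: "card (insert s S0) = alpha W E" using wc_card assms by blast
  have "E s l1" "E s l2" using sym assms(7,8) by blast+
  then have l1n: "l1 \<notin> S0" "l2 \<notin> S0" "s \<notin> S0" using S0p(1) by auto
  have "stable E (S0 \<union> {l1, l2})"
    unfolding stable_def
  proof (intro ballI notI)
    fix a b assume ab: "a \<in> S0 \<union> {l1, l2}" "b \<in> S0 \<union> {l1, l2}" "E a b"
    have sub: "a \<in> W" "b \<in> W" using ab S0p(1) assms(4,5) by auto
    have sl: "s \<noteq> l1" "s \<noteq> l2" using assms(7,8) irr by auto
    consider "a \<in> S0" "b \<in> S0" | "a = l1 \<or> a = l2" | "b = l1 \<or> b = l2" using ab by auto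
    then show False
    proof cases
      case 1 then show ?thesis using S0p(2) ab(3) unfolding stable_def by blast
    next
      case 2 then have "b = s" using assms(9,10) sub ab(3) by auto
      then show ?thesis using ab(2) l1n sl by auto
    next
      case 3 then have "E b a" using ab(3) sym by blast
      with 3 have "a = s" using assms(9,10) sub by auto
      then show ?thesis using ab(1) l1n sl by auto
    qed
  qed
  moreover have "S0 \<union> {l1, l2} \<subseteq> W" using S0p(1) assms(4,5) by auto
  ultimately obtain M where M: "maximal_stable W E M" "S0 \<union> {l1, l2} \<subseteq> M"
    using ext_maximal assms(1) by blast
  have "card M = alpha W E" using wc_card assms M by blast
  moreover have "finite M" using M assms(1) unfolding maximal_stable_def using finite_subset by blast
  then have "card (S0 \<union> {l1, l2}) \<le> card M" using M card_mono by blast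
  moreover have "card (S0 \<union> {l1, l2}) = card S0 + 2" using fS0 l1n assms(6) by simp
  moreover have "card (insert s S0) = card S0 + 1" using fS0 l1n by simp
  ultimately show False using c1 by simp
qed

end

context G0
begin

definition leafW :: "'a set \<Rightarrow> 'a \<Rightarrow> 'a \<Rightarrow> bool" where
  "leafW W v s \<longleftrightarrow> v \<in> W \<and> s \<in> W \<and> E v s \<and> (\<forall>u\<in>W. E v u \<longrightarrow> u = s)"

lemma mainL:
  "finite W \<Longrightarrow> well_covered W E \<Longrightarrow>
   2 * alpha W E \<le> card W + card (iso W E) \<and>
   (2 * alpha W E = card W + card (iso W E) \<longrightarrow>
      (\<exists>p. \<forall>x\<in>W - iso W E. p x \<in> W \<and> E x (p x) \<and> p (p x) = x))"
proof (induction "card W" arbitrary: W rule: less_induct)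
  case less
  have fin: "finite W" and wc: "well_covered W E" using less.prems by auto
  show ?case
  proof (cases "W = iso W E")
    case True
    have isoW: "v \<in> iso W E" if "v \<in> W" for v using True that by simp
    have st: "stable E W" unfolding stable_def using isoW unfolding iso_def by simp
    have a1: "card W \<le> alpha W E" using alpha_ge[OF fin subset_refl st] .
    obtain S where S: "S \<subseteq> W" "stable E S" "card S = alpha W E" using alpha_ex[OF fin] by blast
    have a2: "alpha W E \<le> card W" using S(1,3) card_mono[OF fin] by metis
    have eq: "card (iso W E) = card W" using True by simp
    have "W - iso W E = {}" using True by simp
    then have ex: "\<exists>p. \<forall>x\<in>W - iso W E. p x \<in> W \<and> E x (p x) \<and> p (p x) = x"
      by (metis empty_iff)
    have "2 * alpha W E = card W + card (iso W E)" using a1 a2 eq by simp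
    then show ?thesis using ex by simp
  next
    case False
    have isoW: "iso W E \<subseteq> W" unfolding iso_def by blast
    then obtain v0 where v0: "v0 \<in> W" "v0 \<notin> iso W E" using False by blast
    then obtain u0 where u0: "u0 \<in> W" "E v0 u0" unfolding iso_def by blast
    show ?thesis
    proof (cases "\<exists>v s. leafW W v s")
      case True
      then obtain v s where vs: "leafW W v s" by blast
      have v: "v \<in> W" "s \<in> W" "E v s" "\<And>u. u \<in> W \<Longrightarrow> E v u \<Longrightarrow> u = s"
        using vs unfolding leafW_def by auto
      have sv: "E s v" using sym v(3) by blast
      have vns: "v \<noteq> s" using v(3) irr by blast
      define W' where "W' = W - {v, s}"
      have "{u\<in>W. E v u} = {s}" using v by blast
      then have W'eq: "W' = W - insert v {u\<in>W. E v u}" unfolding W'_def by auto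
      have wc': "well_covered W' E" and al: "alpha W' E + 1 = alpha W E"
        using wcN[OF fin wc v(1)] unfolding W'eq[symmetric] by auto
      have fin': "finite W'" unfolding W'_def using fin by simp
      have c2: "card {v, s} \<le> card W" using fin v(1,2) by (intro card_mono) auto
      have cW: "card W = card W' + 2"
        unfolding W'_def using fin v(1,2) vns c2 by (simp add: card_Diff_subset)
      have isoeq: "iso W' E = iso W E"
      proof
        show "iso W' E \<subseteq> iso W E"
        proof
          fix w assume w: "w \<in> iso W' E"
          have wW': "w \<in> W'" and wn: "\<And>u. u \<in> W' \<Longrightarrow> \<not> E w u" using w unfolding iso_def by auto
          have wW: "w \<in> W" "w \<noteq> v" "w \<noteq> s" using wW' unfolding W'_def by auto
          have nv: "\<not> E w v"
          proof
            assume "E w v"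
            then have "E v w" using sym by blast
            then show False using v(4)[OF wW(1)] wW(3) by blast
          qed
          have nb: "u = s" if "u \<in> W" "E w u" for u
          proof -
            have "u \<notin> W'" using wn that(2) by blast
            then have "u = v \<or> u = s" using that(1) unfolding W'_def by auto
            then show ?thesis using nv that(2) by blast
          qed
          have "\<forall>u\<in>W. \<not> E w u"
          proof (intro ballI notI)
            fix u assume u: "u \<in> W" "E w u"
            then have "u = s" using nb by blast
            then have "E w s" using u by simp
            show False
              using two_leaves[OF fin wc v(2) v(1) wW(1) wW(2)[symmetric] v(3) \<open>E w s\<close>]
                v(4) nb by blast
          qed
          then show "w \<in> iso W E" using wW unfolding iso_def by blast
        qed
      next
        show "iso W E \<subseteq> iso W' E"
        proof
          fix w assume w: "w \<in> iso W E"
          have wW: "w \<in> W" and wn: "\<And>u. u \<in> W \<Longrightarrow> \<not> E w u" using w unfolding iso_def by auto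
          have "w \<noteq> v" using wn v(2,3) by blast
          moreover have "w \<noteq> s" using wn v(1) sv by blast
          ultimately have "w \<in> W'" unfolding W'_def using wW by blast
          moreover have "\<forall>u\<in>W'. \<not> E w u" using wn unfolding W'_def by blast
          ultimately show "w \<in> iso W' E" unfolding iso_def by blast
        qed
      qed
      have lt: "card W' < card W" using cW by simp
      note IH = less.hyps[OF lt fin' wc']
      have ineq: "2 * alpha W E \<le> card W + card (iso W E)"
        using IH isoeq al cW by simp
      have eqp: "\<exists>p. \<forall>x\<in>W - iso W E. p x \<in> W \<and> E x (p x) \<and> p (p x) = x"
        if eq: "2 * alpha W E = card W + card (iso W E)"
      proof -
        have "2 * alpha W' E = card W' + card (iso W' E)" using eq isoeq al cW by simp
        then obtain p' where p': "\<And>x. x \<in> W' - iso W' E \<Longrightarrow> p' x \<in> W' \<and> E x (p' x) \<and> p' (p' x) = x"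
          using IH by blast
        define p where "p = (p'(v := s))(s := v)"
        have "p x \<in> W \<and> E x (p x) \<and> p (p x) = x" if x: "x \<in> W - iso W E" for x
        proof (cases "x = v \<or> x = s")
          case True
          then show ?thesis using vns v(1,2,3) sv unfolding p_def by auto
        next
          case False
          then have xW': "x \<in> W' - iso W' E" using x isoeq unfolding W'_def by auto
          then have px: "p' x \<in> W'" "E x (p' x)" "p' (p' x) = x" using p' by auto
          have "p' x \<noteq> v" "p' x \<noteq> s" using px(1) unfolding W'_def by auto
          then have "p x = p' x" using False unfolding p_def by auto
          moreover have "p (p' x) = p' (p' x)" using \<open>p' x \<noteq> v\<close> \<open>p' x \<noteq> s\<close> unfolding p_def by auto
          moreover have "p' x \<in> W" using px(1) unfolding W'_def by auto
          ultimately show ?thesis using px by simp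
        qed
        then show ?thesis by blast
      qed
      show ?thesis using ineq eqp by blast
    next
      case False
      have noleaf: "\<And>v s. \<not> leafW W v s" using False by blast
      define D where "D = {u\<in>W. E v0 u}"
      define W' where "W' = W - insert v0 D"
      have fD: "finite D" unfolding D_def using fin by simp
      have v0D: "v0 \<notin> D" unfolding D_def using irr by blast
      have DW: "insert v0 D \<subseteq> W" unfolding D_def using v0 by blast
      have Dne: "D \<noteq> {}" unfolding D_def using u0 by blast
      have cD: "card D \<ge> 2"
      proof (rule ccontr)
        assume "\<not> card D \<ge> 2"
        moreover have "card D \<noteq> 0" using fD Dne by simp
        ultimately have "card D = 1" by simp
        then obtain s where "D = {s}" using card_1_singletonE by blast
        then have "leafW W v0 s" unfolding leafW_def D_def using v0(1) by blast
        then show False using noleaf by blast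
      qed
      have wc': "well_covered W' E" and al: "alpha W' E + 1 = alpha W E"
        using wcN[OF fin wc v0(1)] unfolding W'_def D_def by auto
      have fin': "finite W'" unfolding W'_def using fin by simp
      have cW: "card W = card W' + card D + 1"
      proof -
        have "card W' = card W - card (insert v0 D)"
          unfolding W'_def using DW fD by (simp add: card_Diff_subset)
        moreover have "card (insert v0 D) = card D + 1" using fD v0D by simp
        moreover have "card (insert v0 D) \<le> card W" using DW fin card_mono by blast
        ultimately show ?thesis by simp
      qed
      have isoeq: "iso W' E = iso W E"
      proof
        show "iso W' E \<subseteq> iso W E"
        proof
          fix w assume w: "w \<in> iso W' E"
          have wW': "w \<in> W'" and wn: "\<And>u. u \<in> W' \<Longrightarrow> \<not> E w u" using w unfolding iso_def by auto
          have wW: "w \<in> W" "w \<noteq> v0" "w \<notin> D" using wW' unfolding W'_def by auto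
          have inD: "u \<in> D" if "u \<in> W" "E w u" for u
          proof -
            have "u \<notin> W'" using wn that(2) by blast
            then have "u = v0 \<or> u \<in> D" using that(1) unfolding W'_def by auto
            moreover have "u \<noteq> v0"
            proof
              assume "u = v0"
              then have "E v0 w" using that(2) sym by blast
              then show False using wW(1,3) unfolding D_def by blast
            qed
            ultimately show ?thesis by blast
          qed
          have "\<forall>u\<in>W. \<not> E w u"
          proof (intro ballI notI)
            fix u assume u: "u \<in> W" "E w u"
            have uD: "u \<in> D" using inD u by blast
            have "leafW W w u" unfolding leafW_def
            proof (intro conjI ballI impI)
              fix u' assume u': "u' \<in> W" "E w u'"
              have u'D: "u' \<in> D" using inD u' by blast
              show "u' = u"
              proof (rule ccontr)
                assume ne: "u' \<noteq> u"
                have "E u v0" using uD sym unfolding D_def by blast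
                moreover have "E v0 u'" using u'D unfolding D_def by blast
                moreover have "E u' w" using u'(2) sym by blast
                ultimately show False using noC4[OF u(2) _ _ _ wW(2) ne[symmetric]] by blast
              qed
            qed (use u wW in auto)
            then show False using noleaf by blast
          qed
          then show "w \<in> iso W E" using wW unfolding iso_def by blast
        qed
      next
        show "iso W E \<subseteq> iso W' E"
        proof
          fix w assume w: "w \<in> iso W E"
          have wW: "w \<in> W" and wn: "\<And>u. u \<in> W \<Longrightarrow> \<not> E w u" using w unfolding iso_def by auto
          have "w \<noteq> v0" using wn u0 by blast
          moreover have "w \<notin> D"
          proof
            assume "w \<in> D"
            then have "E w v0" using sym unfolding D_def by blast
            then show False using wn v0(1) by blast
          qed
          ultimately have "w \<in> W'" unfolding W'_def using wW by blast
          moreover have "\<forall>u\<in>W'. \<not> E w u" using wn unfolding W'_def by blast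
          ultimately show "w \<in> iso W' E" unfolding iso_def by blast
        qed
      qed
      have lt: "card W' < card W" using cW by simp
      note IH = less.hyps[OF lt fin' wc']
      have "2 * alpha W E < card W + card (iso W E)"
        using IH isoeq al cW cD by simp
      then show ?thesis by simp
    qed
  qed
qed

end

context G0
begin

lemma PPlem:
  assumes wc: "well_covered V E" and cV: "card V = 2 * alpha V E"
    and p: "\<forall>x\<in>V. p x \<in> V \<and> E x (p x) \<and> p (p x) = x" and x: "x \<in> V"
  shows "(\<forall>u. E x u \<longrightarrow> u = p x) \<or> (\<forall>u. E (p x) u \<longrightarrow> u = x)"
proof (rule ccontr)
  assume "\<not> ?thesis"
  then obtain u w where u: "E x u" "u \<noteq> p x" and w: "E (p x) w" "w \<noteq> x" by blast
  have pxV: "p x \<in> V" and Exp: "E x (p x)" and ppx: "p (p x) = x" using p x by auto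
  have uV: "u \<in> V" "w \<in> V" using u(1) w(1) inV2 by blast+
  have Epx: "E (p x) x" using Exp sym by blast
  have uw: "u \<noteq> w"
  proof
    assume "u = w"
    then have "E u (p x)" using w(1) sym by blast
    then show False using notri[OF u(1) _ Epx] by blast
  qed
  have nuw: "\<not> E u w"
  proof
    assume "E u w"
    moreover have "E w (p x)" using w(1) sym by blast
    ultimately show False using noC4[OF u(1) _ _ Epx w(2)[symmetric] u(2)] by blast
  qed
  have st: "stable E {u, w}" unfolding stable_def using nuw irr sym by blast
  have sub: "{u, w} \<subseteq> V" using uV by blast
  obtain M where M: "maximal_stable V E M" "{u, w} \<subseteq> M" using ext_maximal[OF finV sub st] by blast
  have cM: "card M = alpha V E" using wc_card[OF finV wc M(1)] .
  have MV: "M \<subseteq> V" and sM: "stable E M" using M(1) unfolding maximal_stable_def by auto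
  have fM: "finite M" using MV finV finite_subset by blast
  have uM: "u \<in> M" "w \<in> M" using M(2) by auto
  have xM: "x \<notin> M" using sM uM u(1) unfolding stable_def by blast
  have pxM: "p x \<notin> M" using sM uM w(1) unfolding stable_def by blast
  have disj: "M \<inter> p ` M = {}"
  proof (rule ccontr)
    assume "M \<inter> p ` M \<noteq> {}"
    then obtain m where m: "m \<in> M" "p m \<in> M" by blast
    have "E m (p m)" using p m(1) MV by blast
    then show False using sM m unfolding stable_def by blast
  qed
  have inj: "inj_on p M"
  proof (rule inj_onI)
    fix m1 m2 assume "m1 \<in> M" "m2 \<in> M" "p m1 = p m2"
    then show "m1 = m2" using p MV by (metis subsetD)
  qed
  have pM: "p ` M \<subseteq> V - {x, p x}"
  proof
    fix y assume "y \<in> p ` M"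
    then obtain m where m: "m \<in> M" "y = p m" by blast
    have mV: "m \<in> V" using m(1) MV by blast
    have "y \<in> V" using p mV m(2) by blast
    moreover have "y \<noteq> x"
    proof
      assume "y = x"
      then have "m = p x" using p mV m(2) by metis
      then show False using pxM m(1) by blast
    qed
    moreover have "y \<noteq> p x"
    proof
      assume "y = p x"
      then have "m = x" using p mV m(2) x by metis
      then show False using xM m(1) by blast
    qed
    ultimately show "y \<in> V - {x, p x}" by blast
  qed
  have MV2: "M \<subseteq> V - {x, p x}" using MV xM pxM by blast
  have "card (M \<union> p ` M) = card M + card (p ` M)"
    using card_Un_disjoint[OF fM finite_imageI[OF fM] disj] .
  also have "\<dots> = 2 * card M" using card_image[OF inj] by simp
  finally have c1: "card (M \<union> p ` M) = 2 * card M" .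
  have "card (M \<union> p ` M) \<le> card (V - {x, p x})"
    using MV2 pM finV by (intro card_mono) auto
  also have "\<dots> = card V - 2" using x pxV Exp irr finV
    by (subst card_Diff_subset) (auto simp: card_insert_if)
  finally have "2 * card M \<le> card V - 2" using c1 by simp
  moreover have "card {u, w} \<le> card M" using M(2) fM card_mono by blast
  then have "card M \<ge> 2" using uw by simp
  ultimately show False using cM cV by simp
qed

end

locale G1 =
  fixes V :: "'a set" and E :: "'a \<Rightarrow> 'a \<Rightarrow> bool" and p :: "'a \<Rightarrow> 'a"
  assumes finV: "finite V"
    and inV1: "\<And>u v. E u v \<Longrightarrow> u \<in> V"
    and inV2: "\<And>u v. E u v \<Longrightarrow> v \<in> V"
    and sym: "\<And>u v. E u v \<Longrightarrow> E v u"
    and irr: "\<And>v. \<not> E v v"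
    and pV: "\<And>x. x \<in> V \<Longrightarrow> p x \<in> V"
    and pE: "\<And>x. x \<in> V \<Longrightarrow> E x (p x)"
    and pp: "\<And>x. x \<in> V \<Longrightarrow> p (p x) = x"
    and PP: "\<And>x. x \<in> V \<Longrightarrow> (\<forall>u. E x u \<longrightarrow> u = p x) \<or> (\<forall>u. E (p x) u \<longrightarrow> u = x)"
begin

definition Lf :: "'a \<Rightarrow> bool" where "Lf x \<longleftrightarrow> (\<forall>u. E x u \<longrightarrow> u = p x)"

lemma Lf_or: "x \<in> V \<Longrightarrow> Lf x \<or> Lf (p x)"
  unfolding Lf_def using PP pp by metis

lemma injcard:
  assumes "S \<subseteq> V" "stable E S" "finite B" "\<forall>x\<in>S. x \<in> B \<or> p x \<in> B"
  shows "card S \<le> card B"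
proof -
  define f where "f t = (if t \<in> B then t else p t)" for t
  have img: "f ` S \<subseteq> B" using assms(4) unfolding f_def by auto
  have "inj_on f S"
  proof (rule inj_onI)
    fix t1 t2 assume t: "t1 \<in> S" "t2 \<in> S" "f t1 = f t2"
    have tV: "t1 \<in> V" "t2 \<in> V" using t assms(1) by auto
    show "t1 = t2"
    proof (cases "t1 \<in> B"; cases "t2 \<in> B")
      assume "t1 \<in> B" "t2 \<in> B" then show ?thesis using t(3) unfolding f_def by simp
    next
      assume "t1 \<in> B" "t2 \<notin> B"
      then have "t1 = p t2" using t(3) unfolding f_def by simp
      then have "E t2 t1" using pE tV by simp
      then show ?thesis using assms(2) t unfolding stable_def by blast
    next
      assume "t1 \<notin> B" "t2 \<in> B"
      then have "p t1 = t2" using t(3) unfolding f_def by simp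
      then have "E t1 t2" using pE tV by blast
      then show ?thesis using assms(2) t unfolding stable_def by blast
    next
      assume "t1 \<notin> B" "t2 \<notin> B"
      then have "p t1 = p t2" using t(3) unfolding f_def by simp
      then show ?thesis using pp tV by metis
    qed
  qed
  then have "card S = card (f ` S)" by (simp add: card_image)
  also have "\<dots> \<le> card B" using img assms(3) card_mono by blast
  finally show ?thesis .
qed

lemma nbhdV: "nbhd V E A \<subseteq> V" unfolding nbhd_def by blast

lemma char:
  "A \<in> Psi V E \<longleftrightarrow> A \<subseteq> V \<and> stable E A \<and> (\<forall>u\<in>nbhd V E A. p u \<in> A)"
proof
  assume "A \<subseteq> V \<and> stable E A \<and> (\<forall>u\<in>nbhd V E A. p u \<in> A)"
  then have A: "A \<subseteq> V" "stable E A" "\<And>u. u \<in> nbhd V E A \<Longrightarrow> p u \<in> A" by auto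
  have fA: "finite A" using A(1) finV finite_subset by blast
  have "max_stable (cnbhd V E A) E A" unfolding max_stable_def
  proof (intro conjI allI impI)
    show "A \<subseteq> cnbhd V E A" unfolding cnbhd_def by blast
    show "stable E A" by (rule A(2))
    fix T assume T: "T \<subseteq> cnbhd V E A \<and> stable E T"
    have TV: "T \<subseteq> V" using T A(1) nbhdV unfolding cnbhd_def by blast
    have "\<forall>x\<in>T. x \<in> A \<or> p x \<in> A" using T A(3) unfolding cnbhd_def by blast
    then show "card T \<le> card A" using injcard[OF TV _ fA] T by blast
  qed
  then show "A \<in> Psi V E" unfolding Psi_def local_max_stable_def using A(1) by blast
next
  assume "A \<in> Psi V E"
  then have A: "A \<subseteq> V" "stable E A"
    and mx: "\<And>T. T \<subseteq> cnbhd V E A \<Longrightarrow> stable E T \<Longrightarrow> card T \<le> card A"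
    unfolding Psi_def local_max_stable_def max_stable_def by auto
  have fA: "finite A" using A(1) finV finite_subset by blast
  have nadj: "\<not> E a b" if "a \<in> A" "b \<in> A" for a b using A(2) that unfolding stable_def by blast
  have cl: "p u \<in> A" if u: "u \<in> nbhd V E A" for u
  proof (rule ccontr)
    assume puA: "p u \<notin> A"
    have uV: "u \<in> V" and uA: "u \<notin> A" using u unfolding nbhd_def by auto
    define g where "g a = (if Lf a then a else p a)" for a
    have gL: "Lf (g a)" if "a \<in> A" for a using Lf_or[of a] that A(1) unfolding g_def by auto
    have g2: "g a = a \<or> g a = p a" for a unfolding g_def by auto
    have gN: "g a \<in> cnbhd V E A" if a: "a \<in> A" for a
    proof (cases "g a = a")
      case True then show ?thesis using a unfolding cnbhd_def by simp
    next
      case False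
      then have ga: "g a = p a" using g2 by metis
      have aV: "a \<in> V" using a A(1) by blast
      have "p a \<notin> A" using nadj[OF a] pE[OF aV] by blast
      moreover have "E (p a) a" using pE[OF aV] sym by blast
      ultimately have "p a \<in> nbhd V E A" unfolding nbhd_def using pV[OF aV] a by blast
      then show ?thesis unfolding cnbhd_def ga by blast
    qed
    have noteq: "p (g a1) \<noteq> g a2" if a: "a1 \<in> A" "a2 \<in> A" for a1 a2
    proof
      assume h: "p (g a1) = g a2"
      have aV: "a1 \<in> V" "a2 \<in> V" using a A(1) by auto
      consider "g a1 = a1" "g a2 = a2" | "g a1 = a1" "g a2 = p a2"
        | "g a1 = p a1" "g a2 = a2" | "g a1 = p a1" "g a2 = p a2" using g2 by metis
      then show False
      proof cases
        case 1 then have "p a1 = a2" using h by simp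
        then show False using nadj[OF a] pE[OF aV(1)] by simp
      next
        case 2 then have "p a1 = p a2" using h by simp
        then have "a1 = a2" using pp aV by metis
        then show False using 2 h pE[OF aV(1)] irr by metis
      next
        case 3 then have "a1 = a2" using h pp aV by metis
        then show False using 3 pE[OF aV(1)] irr by metis
      next
        case 4 then have "a1 = p a2" using h pp aV by metis
        then show False using nadj[OF a(2) a(1)] pE[OF aV(2)] by simp
      qed
    qed
    have unp: "u \<noteq> p (g a)" if a: "a \<in> A" for a
    proof
      assume h: "u = p (g a)"
      have aV: "a \<in> V" using a A(1) by auto
      show False
      proof (cases "g a = a")
        case True then have "p u = a" using h pp aV by metis
        then show False using puA a by simp
      next
        case False then have "u = a" using h pp aV g2 by metis
        then show False using uA a by simp
      qed
    qed
    have ung: "u \<notin> g ` A"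
    proof
      assume "u \<in> g ` A"
      then obtain a where a: "a \<in> A" "u = g a" by blast
      have aV: "a \<in> V" using a A(1) by auto
      then show False using g2[of a] a uA puA pp by metis
    qed
    have ginj: "inj_on g A"
    proof (rule inj_onI)
      fix a1 a2 assume a: "a1 \<in> A" "a2 \<in> A" "g a1 = g a2"
      have aV: "a1 \<in> V" "a2 \<in> V" using a A(1) by auto
      consider "g a1 = a1" "g a2 = a2" | "g a1 = a1" "g a2 = p a2"
        | "g a1 = p a1" "g a2 = a2" | "g a1 = p a1" "g a2 = p a2" using g2 by metis
      then show "a1 = a2"
      proof cases
        case 1 then show ?thesis using a(3) by metis
      next
        case 2 then have "a1 = p a2" using a(3) by metis
        then show ?thesis using nadj[OF a(2) a(1)] pE[OF aV(2)] by metis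
      next
        case 3 then have "p a1 = a2" using a(3) by metis
        then show ?thesis using nadj[OF a(1) a(2)] pE[OF aV(1)] by metis
      next
        case 4 then have "p a1 = p a2" using a(3) by metis
        then show ?thesis using pp[OF aV(1)] pp[OF aV(2)] by metis
      qed
    qed
    define T where "T = insert u (g ` A)"
    have Tsub: "T \<subseteq> cnbhd V E A" unfolding T_def using gN u unfolding cnbhd_def by blast
    have Tst: "stable E T" unfolding stable_def T_def
    proof (intro ballI notI)
      fix x y assume x: "x \<in> insert u (g ` A)" and y: "y \<in> insert u (g ` A)" and e: "E x y"
      have lem: "False" if a: "a \<in> A" "E (g a) z" "z \<in> insert u (g ` A)" for a z
      proof -
        have "z = p (g a)" using gL[OF a(1)] a(2) unfolding Lf_def by blast
        moreover have "z = u \<or> (\<exists>a'\<in>A. z = g a')" using a(3) by blast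
        ultimately show False using unp[OF a(1)] noteq[OF a(1)] by metis
      qed
      show False
      proof (cases "x = u")
        case True
        show False
        proof (cases "y = u")
          case True then show False using e \<open>x = u\<close> irr by simp
        next
          case False
          then obtain a where a: "a \<in> A" "y = g a" using y by blast
          have "E (g a) x" using e a(2) sym by blast
          then show False using lem[OF a(1)] x by blast
        qed
      next
        case False
        then obtain a where a: "a \<in> A" "x = g a" using x by blast
        then show False using lem[OF a(1)] e y by blast
      qed
    qed
    have "card T = card A + 1"
      unfolding T_def using ung card_image[OF ginj] fA by simp
    then show False using mx[OF Tsub Tst] by simp
  qed
  show "A \<subseteq> V \<and> stable E A \<and> (\<forall>u\<in>nbhd V E A. p u \<in> A)" using A cl by blast
qed

end

context G1
begin

lemma access:
  assumes X: "X \<in> Psi V E" and ne: "X \<noteq> {}"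
  shows "\<exists>x\<in>X. X - {x} \<in> Psi V E"
proof -
  have A: "X \<subseteq> V" "stable E X" "\<And>u. u \<in> nbhd V E X \<Longrightarrow> p u \<in> X" using X char by auto
  have nadj: "\<not> E a b" if "a \<in> X" "b \<in> X" for a b using A(2) that unfolding stable_def by blast
  have good: "X - {a} \<in> Psi V E"
    if a: "a \<in> X" and H: "\<And>b. b \<in> X - {a} \<Longrightarrow> E (p a) b \<Longrightarrow> False" for a
  proof -
    have aV: "a \<in> V" using a A(1) by blast
    have "\<forall>u\<in>nbhd V E (X - {a}). p u \<in> X - {a}"
    proof
      fix u assume u: "u \<in> nbhd V E (X - {a})"
      then obtain b where b: "b \<in> X - {a}" "E u b" and uV: "u \<in> V" and un: "u \<notin> X - {a}"
        unfolding nbhd_def by blast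
      have "u \<noteq> a" using nadj[OF a, of b] b by blast
      then have uX: "u \<notin> X" using un by blast
      then have "u \<in> nbhd V E X" unfolding nbhd_def using uV b by blast
      then have puX: "p u \<in> X" using A(3) by blast
      have "p u \<noteq> a"
      proof
        assume "p u = a"
        then have "u = p a" using pp uV by metis
        then show False using H[OF b(1)] b(2) by blast
      qed
      then show "p u \<in> X - {a}" using puX by blast
    qed
    moreover have "X - {a} \<subseteq> V" using A(1) by blast
    moreover have "stable E (X - {a})" using A(2) unfolding stable_def by blast
    ultimately show ?thesis using char by blast
  qed
  show ?thesis
  proof (cases "\<exists>a\<in>X. Lf (p a)")
    case True
    then obtain a where a: "a \<in> X" "Lf (p a)" by blast
    have aV: "a \<in> V" using a A(1) by blast
    have "False" if "b \<in> X - {a}" "E (p a) b" for b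
    proof -
      have "b = p (p a)" using a(2) that(2) unfolding Lf_def by blast
      then have "b = a" using pp aV by simp
      then show False using that(1) by blast
    qed
    then show ?thesis using good[OF a(1)] a(1) by blast
  next
    case False
    obtain a where a: "a \<in> X" using ne by blast
    have aV: "a \<in> V" using a A(1) by blast
    have "False" if b: "b \<in> X - {a}" "E (p a) b" for b
    proof -
      have bV: "b \<in> V" using b A(1) by blast
      have "Lf b" using Lf_or[OF bV] False b(1) by blast
      moreover have "E b (p a)" using b(2) sym by blast
      ultimately have "p a = p b" unfolding Lf_def by blast
      then have "a = b" using pp aV bV by metis
      then show False using b(1) by blast
    qed
    then show ?thesis using good[OF a] a by blast
  qed
qed

lemma exch:
  assumes X: "X \<in> Psi V E" and Y: "Y \<in> Psi V E" and c: "card X = card Y + 1"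
  shows "\<exists>x\<in>X - Y. Y \<union> {x} \<in> Psi V E"
proof -
  have XA: "X \<subseteq> V" "stable E X" "\<And>u. u \<in> nbhd V E X \<Longrightarrow> p u \<in> X" using X char by auto
  have YA: "Y \<subseteq> V" "stable E Y" "\<And>u. u \<in> nbhd V E Y \<Longrightarrow> p u \<in> Y" using Y char by auto
  have fY: "finite Y" using YA(1) finV finite_subset by blast
  have good: "Y \<union> {x} \<in> Psi V E"
    if x: "x \<in> X" "x \<notin> Y" "p x \<notin> Y" and H: "\<And>u. E x u \<Longrightarrow> u \<noteq> p x \<Longrightarrow> p u \<in> Y" for x
  proof -
    have xV: "x \<in> V" using x XA(1) by blast
    have nxy: "\<not> E y x" if "y \<in> Y" for y
    proof
      assume "E y x"
      then have "x \<in> nbhd V E Y" unfolding nbhd_def using xV x(2) sym that by blast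
      then show False using YA(3) x(3) by blast
    qed
    have st: "stable E (Y \<union> {x})" unfolding stable_def
    proof (intro ballI notI)
      fix a b assume a: "a \<in> Y \<union> {x}" and b: "b \<in> Y \<union> {x}" and e: "E a b"
      show False
      proof (cases "a = x")
        case True
        then show False using e b nxy sym irr by blast
      next
        case False then have "a \<in> Y" using a by blast
        then show False using e b nxy YA(2) unfolding stable_def by blast
      qed
    qed
    have cl: "\<forall>u\<in>nbhd V E (Y \<union> {x}). p u \<in> Y \<union> {x}"
    proof
      fix u assume u: "u \<in> nbhd V E (Y \<union> {x})"
      then obtain a where a: "a \<in> Y \<union> {x}" "E u a" and uV: "u \<in> V" and un: "u \<notin> Y \<union> {x}"
        unfolding nbhd_def by blast
      show "p u \<in> Y \<union> {x}"
      proof (cases "a = x")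
        case True
        then have exu: "E x u" using a(2) sym by blast
        show ?thesis
        proof (cases "u = p x")
          case True then show ?thesis using pp xV by simp
        next
          case False then show ?thesis using H exu by blast
        qed
      next
        case False
        then have "a \<in> Y" using a by blast
        then have "u \<in> nbhd V E Y" unfolding nbhd_def using uV un a(2) by blast
        then show ?thesis using YA(3) by blast
      qed
    qed
    have "Y \<union> {x} \<subseteq> V" using YA(1) xV by blast
    then show ?thesis using char st cl by blast
  qed
  have "\<exists>x\<in>X. x \<notin> Y \<and> p x \<notin> Y"
  proof (rule ccontr)
    assume "\<not> ?thesis"
    then have "\<forall>x\<in>X. x \<in> Y \<or> p x \<in> Y" by blast
    then have "card X \<le> card Y" using injcard[OF XA(1,2) fY] by blast
    then show False using c by simp
  qed
  then obtain x where x: "x \<in> X" "x \<notin> Y" "p x \<notin> Y" by blast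
  have xV: "x \<in> V" using x XA(1) by blast
  show ?thesis
  proof (cases "\<forall>u. E x u \<longrightarrow> u \<noteq> p x \<longrightarrow> p u \<in> Y")
    case True
    then show ?thesis using good[OF x] x by blast
  next
    case False
    then obtain u where u: "E x u" "u \<noteq> p x" "p u \<notin> Y" by blast
    have uV: "u \<in> V" using u(1) inV2 by blast
    have uX: "u \<notin> X" using XA(2) x(1) u(1) unfolding stable_def by blast
    have "u \<in> nbhd V E X" unfolding nbhd_def using uV uX u(1) sym x(1) by blast
    then have puX: "p u \<in> X" using XA(3) by blast
    have uY: "u \<notin> Y"
    proof
      assume "u \<in> Y"
      then have "x \<in> nbhd V E Y" unfolding nbhd_def using xV x(2) u(1) by blast
      then show False using YA(3) x(3) by blast
    qed
    define x' where "x' = p u"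
    have x': "x' \<in> X" "x' \<notin> Y" "p x' \<notin> Y" unfolding x'_def using puX u(3) uY pp uV by auto
    have x'V: "x' \<in> V" using x'(1) XA(1) by blast
    have px': "p x' = u" unfolding x'_def using pp uV by simp
    have H': "p u' \<in> Y" if "E x' u'" "u' \<noteq> p x'" for u'
    proof -
      have "\<not> Lf x'" using that unfolding Lf_def by blast
      then have "Lf u" using Lf_or[OF x'V] px' by simp
      moreover have "E u x" using u(1) sym by blast
      ultimately have "x = p u" unfolding Lf_def by blast
      then have "u = p x" using pp uV by simp
      then show ?thesis using u(2) by blast
    qed
    show ?thesis using good[OF x' H'] x' by blast
  qed
qed

lemma greedoid_Psi: "greedoid V (Psi V E)"
  unfolding greedoid_def
proof (intro conjI ballI impI)
  have "{} \<in> Psi V E" using char unfolding nbhd_def stable_def by auto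
  then show "Psi V E \<noteq> {}" by blast
next
  fix X assume "X \<in> Psi V E" then show "X \<subseteq> V" using char by blast
next
  fix X assume "X \<in> Psi V E" "X \<noteq> {}" then show "\<exists>x\<in>X. X - {x} \<in> Psi V E" using access by blast
next
  fix X Y assume "X \<in> Psi V E" "Y \<in> Psi V E" "card X = card Y + 1"
  then show "\<exists>x\<in>X - Y. Y \<union> {x} \<in> Psi V E" using exch by blast
qed

end

lemma tri_false:
  assumes g: "graph V E" and gi: "girth_ge V E 5" and e: "E a b" "E b c" "E c a"
  shows False
proof -
  have irr: "\<And>v. \<not> E v v" and inV: "\<And>u v. E u v \<Longrightarrow> u \<in> V" using g unfolding graph_def by blast+
  have "is_cycle V E [a, b, c]" unfolding is_cycle_def
  proof (intro conjI allI impI)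
    show "distinct [a, b, c]" using e irr by auto
    show "set [a, b, c] \<subseteq> V" using e inV by auto
    fix i assume "i < length [a, b, c]"
    then have "i = 0 \<or> i = 1 \<or> i = 2" by auto
    then show "E ([a, b, c] ! i) ([a, b, c] ! ((i + 1) mod length [a, b, c]))" using e by auto
  qed simp
  then show False using gi unfolding girth_ge_def by fastforce
qed

lemma c4_false:
  assumes g: "graph V E" and gi: "girth_ge V E 5" and e: "E a b" "E b c" "E c d" "E d a"
    and ne: "a \<noteq> c" "b \<noteq> d"
  shows False
proof -
  have irr: "\<And>v. \<not> E v v" and inV: "\<And>u v. E u v \<Longrightarrow> u \<in> V" using g unfolding graph_def by blast+
  have "is_cycle V E [a, b, c, d]" unfolding is_cycle_def
  proof (intro conjI allI impI)
    show "distinct [a, b, c, d]" using e irr ne by auto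
    show "set [a, b, c, d] \<subseteq> V" using e inV by auto
    fix i assume "i < length [a, b, c, d]"
    then have "i = 0 \<or> i = 1 \<or> i = 2 \<or> i = 3" by auto
    then show "E ([a, b, c, d] ! i) ([a, b, c, d] ! ((i + 1) mod length [a, b, c, d]))" using e by auto
  qed simp
  then show False using gi unfolding girth_ge_def by fastforce
qed

theorem corollary1:
  fixes V :: "'a set" and E :: "'a \<Rightarrow> 'a \<Rightarrow> bool"
  assumes "graph V E"
    and "very_well_covered V E"
    and "girth_ge V E 5"
  shows "greedoid V (Psi V E)"
proof -
  have g: "finite V" "\<And>u v. E u v \<Longrightarrow> u \<in> V" "\<And>u v. E u v \<Longrightarrow> v \<in> V"
    "\<And>u v. E u v \<Longrightarrow> E v u" "\<And>v. \<not> E v v"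
    using assms(1) unfolding graph_def by blast+
  interpret G0 V E
  proof
    show "\<And>a b c. E a b \<Longrightarrow> E b c \<Longrightarrow> E c a \<Longrightarrow> False" using tri_false[OF assms(1,3)] by blast
    show "\<And>a b c d. E a b \<Longrightarrow> E b c \<Longrightarrow> E c d \<Longrightarrow> E d a \<Longrightarrow> a \<noteq> c \<Longrightarrow> b \<noteq> d \<Longrightarrow> False"
      using c4_false[OF assms(1,3)] by blast
  qed (fact g)+
  have wc: "well_covered V E" and ni: "\<forall>v\<in>V. \<exists>u. E v u" and cV: "card V = 2 * alpha V E"
    using assms(2) unfolding very_well_covered_def by auto
  have iso0: "iso V E = {}"
  proof -
    have "v \<notin> iso V E" if "v \<in> V" for v
    proof -
      have "\<exists>u. E v u" using bspec[OF ni that] .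
      then obtain u where vu: "E v u" ..
      have uV: "u \<in> V" using g(3)[OF vu] .
      have "\<not> (\<forall>u'\<in>V. \<not> E v u')" using uV vu by metis
      then show ?thesis unfolding iso_def by simp
    qed
    moreover have "iso V E \<subseteq> V" unfolding iso_def by blast
    ultimately show ?thesis by blast
  qed
  have "2 * alpha V E = card V + card (iso V E)" using cV iso0 by simp
  then obtain p where p: "\<forall>x\<in>V - iso V E. p x \<in> V \<and> E x (p x) \<and> p (p x) = x"
    using conjunct2[OF mainL[OF g(1) wc]] by metis
  then have p': "\<forall>x\<in>V. p x \<in> V \<and> E x (p x) \<and> p (p x) = x" using iso0 by simp
  interpret G1 V E p
  proof
    fix x assume x: "x \<in> V"
    show "p x \<in> V" "E x (p x)" "p (p x) = x" using p' x by auto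
    show "(\<forall>u. E x u \<longrightarrow> u = p x) \<or> (\<forall>u. E (p x) u \<longrightarrow> u = x)"
      using PPlem[OF wc cV p' x] .
  qed (fact g)+
  show ?thesis by (rule greedoid_Psi)
qed

end
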